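(* Let $k \in \mathbb{N}$. For every $n \in \mathbb{N}$ and all integers $h, t$ with $0 \le h \le k-1$ and $1 \le t \le F_n$: (i) $a_{k(F_{n+1}-1)+hF_n+t+1} = kF_{n+2} - k + 1 + hF_{n+1} + \lfloor (F_{n+1}+1+t)\varphi \rfloor - \lfloor (F_{n+1}+1)\varphi \rfloor$; (ii) $b_{k(F_{n+1}-1)+hF_n+t+1} = kF_{n+3} + hF_{n+2} - k + t + 2 + \lfloor (F_{n+1}+1+t)\varphi \rfloor - \lfloor (F_{n+1}+1)\varphi \rfloor$, where $\varphi = \frac{1+\sqrt{5}}{2}$.
   Context: Fibonacci numbers: $F_1 = F_2 = 1$, $F_{i+2} = F_{i+1} + F_i$. Let $\sigma$ be the substitution on finite sequences over $\{1,2\}$ replacing each entry $1$ by $2$ and each entry $2$ by $2,1$. Let $C_{1,1} = (1)$, $C_{i+1,1} = \sigma(C_{i,1})$. For fixed $k \in \mathbb{N}$ and $i \in \mathbb{N}$, let $C_i^{(k)}$ be the concatenation of $k$ copies of $C_{i,1}$. Let $(c_n)_{n \in \mathbb{N}}$ be the infinite sequence obtained by concatenating $C_1^{(k)}, C_2^{(k)}, C_3^{(k)}, \dots$ in order, and let $d_n = c_n + 1$. Define $a_1 = k+1$, $a_n = k+1 + \sum_{i=1}^{n-1} c_i$, and $b_1 = 2k+2$, $b_n = 2k+2 + \sum_{i=1}^{n-1} d_i$ for $n \in \mathbb{N}$. *)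

theory Defs
  imports Complex_Main "HOL-Number_Theory.Fib"
begin

(* Fibonacci numbers: library fib, fib 1 = fib 2 = 1, fib (n+2) = fib (n+1) + fib n. *)

definition sigma :: "nat list \<Rightarrow> nat list" where
  "sigma xs = concat (map (\<lambda>x. if x = 1 then [2] else [2, 1]) xs)"

(* C i = C_{i,1}, for i \<ge> 1 *)
fun Cw :: "nat \<Rightarrow> nat list" where
  "Cw 0 = [1]"
| "Cw (Suc 0) = [1]"
| "Cw (Suc (Suc i)) = sigma (Cw (Suc i))"

definition Ck :: "nat \<Rightarrow> nat \<Rightarrow> nat list" where
  "Ck k i = concat (replicate k (Cw i))"

definition cprefix :: "nat \<Rightarrow> nat \<Rightarrow> nat list" where
  "cprefix k m = concat (map (Ck k) [1..<Suc m])"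

(* c_n (1-indexed); for k \<ge> 1 the prefix of n blocks has length \<ge> n *)
definition cseq :: "nat \<Rightarrow> nat \<Rightarrow> nat" where
  "cseq k n = cprefix k n ! (n - 1)"

definition dseq :: "nat \<Rightarrow> nat \<Rightarrow> nat" where
  "dseq k n = cseq k n + 1"

definition aseq :: "nat \<Rightarrow> nat \<Rightarrow> int" where
  "aseq k n = int (k + 1) + (\<Sum>i = 1..<n. int (cseq k i))"

definition bseq :: "nat \<Rightarrow> nat \<Rightarrow> int" where
  "bseq k n = int (2 * k + 2) + (\<Sum>i = 1..<n. int (dseq k i))"

definition phi :: real where
  "phi = (1 + sqrt 5) / 2"

end

theory Submission
  imports Defs "HOL-Computational_Algebra.Primes"
begin

lemma no_sq5: "(q::nat)^2 = 5 * p^2 \<Longrightarrow> p = 0"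
proof (induction p arbitrary: q rule: less_induct)
  case (less p)
  have "prime (5::nat)" by simp
  have "5 dvd q^2" using less.prems by simp
  hence "5 dvd q" using \<open>prime (5::nat)\<close> prime_dvd_power by blast
  then obtain r where r: "q = 5 * r" by blast
  hence "p^2 = 5 * r^2" using less.prems by (simp add: power2_eq_square)
  show "p = 0"
  proof (rule ccontr)
    assume "p \<noteq> 0"
    have "r < p"
    proof (rule ccontr)
      assume "\<not> r < p" hence "p \<le> r" by simp
      hence "p^2 \<le> r^2" by (simp add: power_mono)
      with \<open>p^2 = 5 * r^2\<close> \<open>p \<noteq> 0\<close> show False by simp
    qed
    from less.IH[OF this, of p] \<open>p^2 = 5 * r^2\<close> have "r = 0" by simp
    with \<open>p^2 = 5 * r^2\<close> \<open>p \<noteq> 0\<close> show False by simp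
  qed
qed

lemma phi_sq: "phi^2 = phi + 1"
  unfolding phi_def by (simp add: power2_eq_square field_simps)

lemma phi_bounds: "1.6 < phi" "phi < 1.7"
proof -
  have "2.2 < sqrt 5" by (rule real_less_rsqrt) (simp add: power2_eq_square)
  moreover have "sqrt 5 < sqrt (2.4^2)" by (subst real_sqrt_less_iff) (simp add: power2_eq_square)
  hence "sqrt 5 < 2.4" by simp
  ultimately show "1.6 < phi" "phi < 1.7" unfolding phi_def by auto
qed

lemma phi_irr: assumes "p > 0" shows "real p * phi \<noteq> of_int z"
proof
  assume h: "real p * phi = of_int z"
  hence "real p * sqrt 5 = 2 * of_int z - real p" unfolding phi_def by (simp add: field_simps)
  hence "(real p * sqrt 5)^2 = (2 * of_int z - real p)^2" by simp
  hence e: "5 * (real p)^2 = (2 * of_int z - real p)^2" by (simp add: power_mult_distrib)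
  have "real p \<le> real p * phi" using mult_left_mono[of 1 phi "real p"] phi_bounds by simp
  hence "of_int (int p) \<le> (of_int z::real)" using h by simp
  hence "int p \<le> z" by (simp only: of_int_le_iff)
  hence "2 * z - int p \<ge> 0" by simp
  then obtain q where q: "2 * z - int p = int q" using nonneg_int_cases by blast
  hence "real q = 2 * of_int z - real p" by (metis of_int_of_nat_eq of_int_diff of_int_mult of_int_numeral)
  hence "real (q^2) = real (5 * p^2)" using e by simp
  hence "q^2 = 5 * p^2" using of_nat_eq_iff by blast
  with no_sq5 assms show False by auto
qed

definition g :: "nat \<Rightarrow> int" where "g x = \<lfloor>real x * phi\<rfloor>"

lemma g_step: "g (Suc p) - g p = 1 \<or> g (Suc p) - g p = 2"
proof -
  define x where "x = real p * phi"
  have "g (Suc p) = \<lfloor>x + phi\<rfloor>" unfolding g_def x_def by (simp add: distrib_right add.commute)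
  have a: "of_int \<lfloor>x\<rfloor> \<le> x" "x < of_int \<lfloor>x\<rfloor> + 1" by linarith+
  have "\<lfloor>x\<rfloor> + 1 \<le> \<lfloor>x + phi\<rfloor>" unfolding le_floor_iff of_int_add of_int_1 using a phi_bounds by linarith
  moreover have "\<lfloor>x + phi\<rfloor> \<le> \<lfloor>x\<rfloor> + 2" unfolding floor_le_iff of_int_add of_int_numeral using a phi_bounds by linarith
  ultimately show ?thesis using \<open>g (Suc p) = _\<close> unfolding g_def x_def by linarith
qed

lemma g_mono: "a < b \<Longrightarrow> g a < g b"
proof (induction b)
  case 0 then show ?case by simp
next
  case (Suc b)
  then show ?case using g_step[of b] by (cases "a = b") auto
qed

lemma g1: "g 1 = 1"
  unfolding g_def using phi_bounds by (simp add: floor_eq_iff)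

lemma g1': "g (Suc 0) = 1" using g1 by simp

lemma g2: "g 2 = 3"
  unfolding g_def using phi_bounds by (simp add: floor_eq_iff)

lemma key:
  assumes "p \<ge> 1"
  shows "g (Suc p) - g p = 2 \<longleftrightarrow> (\<exists>m\<ge>1. g m = int p)"
proof -
  define x where "x = real p * phi"
  define fl where "fl = \<lfloor>x\<rfloor>"
  define f where "f = x - of_int fl"
  have f0: "0 \<le> f" "f < 1" unfolding f_def fl_def by linarith+
  have fne: "f \<noteq> 0" unfolding f_def x_def using phi_irr[of p fl] assms by auto
  have fne2: "f \<noteq> 2 - phi"
  proof
    assume "f = 2 - phi"
    hence "real (Suc p) * phi = of_int (fl + 2)" unfolding f_def x_def by (simp add: algebra_simps)
    thus False using phi_irr[of "Suc p" "fl+2"] by simp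
  qed
  have xe: "x = of_int fl + f" unfolding f_def by simp
  have gs: "g (Suc p) = \<lfloor>x + phi\<rfloor>" unfolding g_def x_def by (simp add: distrib_right add.commute)
  have gp: "g p = fl" unfolding g_def fl_def x_def by simp
  have "g (Suc p) - g p = 2 \<longleftrightarrow> f > 2 - phi"
  proof -
    have "\<lfloor>x + phi\<rfloor> = fl + \<lfloor>f + phi\<rfloor>" unfolding xe
      by (metis add.commute add.left_commute floor_add_int)
    moreover have "f > 2 - phi \<Longrightarrow> \<lfloor>f + phi\<rfloor> = 2" using f0 phi_bounds by (simp add: floor_eq_iff)
    moreover have "f < 2 - phi \<Longrightarrow> \<lfloor>f + phi\<rfloor> = 1" using f0 phi_bounds by (simp add: floor_eq_iff)
    ultimately show ?thesis using gs gp fne2 by fastforce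
  qed
  also have "\<dots> \<longleftrightarrow> (\<exists>m\<ge>1. g m = int p)"
  proof
    assume h: "f > 2 - phi"
    define m where "m = fl - int p + 1"
    have "x \<ge> real p" unfolding x_def using phi_bounds mult_left_mono[of 1 phi "real p"] by simp
    hence "fl \<ge> int p" unfolding fl_def by linarith
    hence m1: "m \<ge> 1" unfolding m_def by simp
    have "of_int m * phi = real p + (1 - f) * phi"
    proof -
      have "of_int m = x - real p + 1 - f" unfolding m_def f_def by simp
      hence "of_int m * phi = (x - real p + 1 - f) * phi" by simp
      also have "\<dots> = real p * phi^2 - real p * phi + (1 - f) * phi"
        unfolding x_def by (simp add: algebra_simps power2_eq_square)
      finally have "of_int m * phi = real p * phi^2 - real p * phi + (1 - f) * phi" .
      thus ?thesis using phi_sq by (simp add: algebra_simps)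
    qed
    moreover have "(1 - f) * phi < 1"
    proof -
      have "(1 - f) * phi < (phi - 1) * phi" using h phi_bounds by (intro mult_strict_right_mono) auto
      also have "\<dots> = 1" using phi_sq by (simp add: algebra_simps power2_eq_square)
      finally show ?thesis .
    qed
    moreover have "(1 - f) * phi \<ge> 0" using f0 phi_bounds by simp
    ultimately have "g (nat m) = int p" unfolding g_def using m1 by (simp add: floor_eq_iff)
    thus "\<exists>m\<ge>1. g m = int p" using m1 by (intro exI[of _ "nat m"]) auto
  next
    assume "\<exists>m\<ge>1. g m = int p"
    then obtain m where m1: "m \<ge> 1" and gm: "g m = int p" by blast
    have lo: "real p \<le> real m * phi" and hi: "real m * phi < real p + 1"
      using gm unfolding g_def by (simp_all add: floor_eq_iff)
    have inv: "1 / phi = phi - 1" using phi_sq phi_bounds by (simp add: field_simps power2_eq_square)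
    have "real m * phi * (phi - 1) = real m * (phi^2 - phi)" by (simp add: algebra_simps power2_eq_square)
    hence "real m = real m * phi * (phi - 1)" using phi_sq by simp
    have pinv: "real p * (phi - 1) = x - real p" unfolding x_def by (simp add: algebra_simps)
    have A: "x - real p \<le> real m" 
    proof -
      have "real p * (phi - 1) \<le> real m * phi * (phi - 1)" using lo phi_bounds by (intro mult_right_mono) auto
      thus ?thesis using pinv \<open>real m = _\<close> by simp
    qed
    have B: "real m < x - real p + (phi - 1)"
    proof -
      have "real m * phi * (phi - 1) < (real p + 1) * (phi - 1)" using hi phi_bounds by (intro mult_strict_right_mono) auto
      thus ?thesis using pinv \<open>real m = _\<close> by (simp add: algebra_simps)
    qed
    define j where "j = int m - (fl - int p)"
    have "f \<le> of_int j" and "of_int j < f + phi - 1" using A B unfolding j_def xe by simp_all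
    hence "of_int j > (0::real)" using fne f0 by linarith
    hence "j \<ge> 1" by simp
    hence "(1::real) \<le> of_int j" by simp
    hence "1 < f + phi - 1" using \<open>of_int j < f + phi - 1\<close> by linarith
    thus "f > 2 - phi" by simp
  qed
  finally show ?thesis .
qed

definition w :: "nat \<Rightarrow> nat" where "w j = nat (g (Suc (Suc j)) - g (Suc j))"

lemma w_int: "int (w j) = g (Suc (Suc j)) - g (Suc j)"
  unfolding w_def using g_step[of "Suc j"] by auto

lemma w_vals: "w j = 1 \<or> w j = 2"
  unfolding w_def using g_step[of "Suc j"] by auto

lemma w_sum: "(\<Sum>j<N. int (w j)) = g (Suc N) - 1"
  by (induction N) (simp_all add: g1' w_int)

lemma sigma_append: "sigma (xs @ ys) = sigma xs @ sigma ys"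
  unfolding sigma_def by simp

lemma sigma_nil[simp]: "sigma [] = []" unfolding sigma_def by simp

lemma sigma_single: "sigma [a] = (if a = 1 then [2] else [2, 1])"
  unfolding sigma_def by simp

lemma g_pos: "g (Suc N) \<ge> 1"
  using g_mono[of 1 "Suc N"] g1 by (cases N) auto

lemma sigma_map: "sigma (map w [0..<N]) = map w [0..<nat (g (Suc N) - 1)]"
proof (induction N)
  case 0 then show ?case by (simp add: g1')
next
  case (Suc N)
  define M where "M = nat (g (Suc N) - 1)"
  have gN: "g (Suc N) = int M + 1" unfolding M_def using g_pos[of N] by simp
  have gNN: "g (Suc (Suc N)) = g (Suc N) + int (w N)" using w_int[of N] by simp
  have wM: "w M = 2"
  proof -
    have "g (Suc (Suc M)) - g (Suc M) = 2"
      using key[of "Suc M"] gN by (intro key[THEN iffD2]) (auto intro!: exI[of _ "Suc N"])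
    thus ?thesis unfolding w_def by simp
  qed
  have "sigma (map w [0..<Suc N]) = map w [0..<M] @ sigma [w N]"
    using Suc.IH by (simp add: sigma_append M_def)
  also have "\<dots> = map w [0..<nat (g (Suc (Suc N)) - 1)]"
  proof (cases "w N = 1")
    case True
    hence "nat (g (Suc (Suc N)) - 1) = Suc M" using gNN gN by simp
    then show ?thesis using True wM by (simp add: sigma_single)
  next
    case False
    hence w2: "w N = 2" using w_vals[of N] by simp
    hence e: "nat (g (Suc (Suc N)) - 1) = Suc (Suc M)" using gNN gN by simp
    have "w (Suc M) = 1"
    proof (rule ccontr)
      assume "w (Suc M) \<noteq> 1"
      hence "w (Suc M) = 2" using w_vals by blast
      hence "g (Suc (Suc (Suc M))) - g (Suc (Suc M)) = 2" using w_int[of "Suc M"] by simp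
      then obtain m where "m \<ge> 1" "g m = int (Suc (Suc M))"
        using key[of "Suc (Suc M)"] by auto
      hence gm: "g m = g (Suc N) + 1" using gN by simp
      have "g (Suc (Suc N)) = g (Suc N) + 2" using gNN w2 by simp
      show False
      proof (cases "m \<le> Suc N")
        case True
        hence "g m \<le> g (Suc N)" using g_mono[of m "Suc N"] by (cases "m = Suc N") auto
        then show False using gm by simp
      next
        case False
        hence "g m \<ge> g (Suc (Suc N))" using g_mono[of "Suc (Suc N)" m] by (cases "m = Suc (Suc N)") auto
        then show False using gm \<open>g (Suc (Suc N)) = g (Suc N) + 2\<close> by simp
      qed
    qed
    then show ?thesis using w2 wM e by (simp add: sigma_single)
  qed
  finally show ?case .
qed

declare Cw.simps(3)[simp del]

lemma sigma_Cw: "n \<ge> 1 \<Longrightarrow> sigma (Cw n) = Cw (Suc n)"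
  by (cases n) (auto simp: Cw.simps(3))

lemma Cw_rec: "Cw (Suc n + 2) = Cw (Suc n + 1) @ Cw (Suc n)"
proof (induction n)
  case 0 then show ?case by (simp add: numeral_2_eq_2 sigma_single Cw.simps(3))
next
  case (Suc n)
  have "Cw (Suc (Suc n) + 2) = sigma (Cw (Suc n + 2))" by (simp add: numeral_2_eq_2 Cw.simps(3))
  also have "\<dots> = sigma (Cw (Suc n + 1)) @ sigma (Cw (Suc n))" using Suc.IH by (simp add: sigma_append)
  also have "\<dots> = Cw (Suc (Suc n) + 1) @ Cw (Suc (Suc n))" using sigma_Cw by simp
  finally show ?case .
qed

lemma Cw_len_sum: "length (Cw (Suc n)) = fib (Suc n) \<and> sum_list (Cw (Suc n)) = fib (Suc (Suc n))"
proof (induction n rule: nat_less_induct)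
  case (1 n)
  show ?case
  proof (cases n)
    case 0 then show ?thesis by (simp add: Cw.simps(3))
  next
    case (Suc n')
    show ?thesis
    proof (cases n')
      case 0 then show ?thesis using Suc by (simp add: sigma_single Cw.simps(3))
    next
      case (Suc n'')
      have "Cw (Suc n) = Cw (Suc n'' + 1) @ Cw (Suc n'')" using Cw_rec[of n''] \<open>n = Suc n'\<close> Suc
        by (simp add: numeral_2_eq_2)
      moreover have "n' < n" "n'' < n" using \<open>n = Suc n'\<close> Suc by auto
      hence "length (Cw (Suc n')) = fib (Suc n') \<and> sum_list (Cw (Suc n')) = fib (Suc (Suc n'))"
        "length (Cw (Suc n'')) = fib (Suc n'') \<and> sum_list (Cw (Suc n'')) = fib (Suc (Suc n''))"
        using "1" by blast+
      moreover have "Suc n'' + 1 = Suc n'" using Suc by simp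
      ultimately show ?thesis using \<open>n = Suc n'\<close> Suc by (simp del: fib2 add: fib2[of "Suc n''"] fib2[of "Suc (Suc n'')"])
    qed
  qed
qed

lemma Cw_len: "n \<ge> 1 \<Longrightarrow> length (Cw n) = fib n"
  using Cw_len_sum[of "n - 1"] by simp

lemma Cw_sum: "n \<ge> 1 \<Longrightarrow> sum_list (Cw n) = fib (Suc n)"
  using Cw_len_sum[of "n - 1"] by simp

lemma Cw_w: "Cw (Suc (Suc n)) = map w [0..<fib (Suc (Suc n))]"
proof (induction n)
  case 0
  have "w 0 = 2" unfolding w_def using g1 g2 by (simp add: numeral_2_eq_2)
  then show ?case by (simp add: sigma_def Cw.simps(3))
next
  case (Suc n)
  have "Cw (Suc (Suc (Suc n))) = sigma (Cw (Suc (Suc n)))" by (simp only: Cw.simps)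
  also have "\<dots> = sigma (map w [0..<fib (Suc (Suc n))])" by (simp only: Suc.IH)
  also have "\<dots> = map w [0..<nat (g (Suc (fib (Suc (Suc n)))) - 1)]" by (rule sigma_map)
  finally have e: "Cw (Suc (Suc (Suc n))) = map w [0..<nat (g (Suc (fib (Suc (Suc n)))) - 1)]" .
  have len: "length (Cw (Suc (Suc (Suc n)))) = fib (Suc (Suc (Suc n)))" by (rule Cw_len) simp
  have "length (Cw (Suc (Suc (Suc n)))) = nat (g (Suc (fib (Suc (Suc n)))) - 1)"
    unfolding e by (simp only: length_map length_upt diff_zero)
  hence "nat (g (Suc (fib (Suc (Suc n)))) - 1) = fib (Suc (Suc (Suc n)))" using len by (simp only:)
  with e show ?case by (simp del: fib2)
qed

lemma sum_list_take: "t \<le> length xs \<Longrightarrow> sum_list (take t xs) = (\<Sum>j<t. xs ! j)"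
  by (induction t) (simp_all add: take_Suc_conv_app_nth)

lemma floor_part:
  assumes "n \<ge> 1" "t \<le> fib n"
  shows "g (fib (n + 1) + 1 + t) - g (fib (n + 1) + 1) = int (sum_list (take t (Cw n)))"
proof -
  have tel: "g (fib (n + 1) + 1 + t) - g (fib (n + 1) + 1) = (\<Sum>j<t. int (w (fib (n + 1) + j)))"
    by (induction t) (simp_all add: w_int)
  have "\<And>j. j < t \<Longrightarrow> w (fib (n + 1) + j) = Cw n ! j"
  proof -
    fix j assume "j < t"
    obtain n' where n': "n = Suc n'" using assms by (cases n) auto
    have e: "Cw (n + 2) = Cw (n + 1) @ Cw n" using Cw_rec[of n'] n' by simp
    have l: "length (Cw (n + 1)) = fib (n + 1)" using Cw_len by simp
    have "Cw (n + 2) = map w [0..<fib (n + 2)]" using Cw_w[of n] by (simp add: numeral_2_eq_2)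
    moreover have "fib (n + 1) + j < fib (n + 2)" using \<open>j < t\<close> assms fib_plus_2[of n] by simp
    ultimately have "w (fib (n + 1) + j) = Cw (n + 2) ! (fib (n + 1) + j)" by simp
    also have "\<dots> = Cw n ! j" using e l by (simp add: nth_append)
    finally show "w (fib (n + 1) + j) = Cw n ! j" .
  qed
  hence "(\<Sum>j<t. int (w (fib (n + 1) + j))) = (\<Sum>j<t. int (Cw n ! j))" by simp
  also have "\<dots> = int (sum_list (take t (Cw n)))"
    using sum_list_take[of t "Cw n"] assms Cw_len by simp
  finally show ?thesis using tel by simp
qed

lemma sum_list_concat': "sum_list (concat xss) = sum_list (map sum_list (xss :: nat list list))"
  by (induction xss) simp_all

lemma cprefix_Suc: "cprefix k (Suc j) = cprefix k j @ Ck k (Suc j)"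
  unfolding cprefix_def by simp

lemma cprefix_0: "cprefix k 0 = []"
  unfolding cprefix_def by simp

lemma Ck_len: "i \<ge> 1 \<Longrightarrow> length (Ck k i) = k * fib i"
  unfolding Ck_def by (simp add: length_concat Cw_len sum_list_replicate)

lemma Ck_sum: "i \<ge> 1 \<Longrightarrow> sum_list (Ck k i) = k * fib (Suc i)"
  unfolding Ck_def by (simp add: sum_list_concat' Cw_sum sum_list_replicate)

lemma cprefix_len: "length (cprefix k j) + k = k * fib (j + 2)"
proof (induction j)
  case 0 then show ?case by (simp add: cprefix_0)
next
  case (Suc j)
  have "length (cprefix k (Suc j)) + k = length (cprefix k j) + k + k * fib (Suc j)"
    by (simp add: cprefix_Suc Ck_len)
  also have "\<dots> = k * fib (Suc j + 2)" using Suc.IH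
    by (simp add: numeral_2_eq_2 algebra_simps)
  finally show ?case .
qed

lemma cprefix_sum: "sum_list (cprefix k j) + 2 * k = k * fib (j + 3)"
proof (induction j)
  case 0 then show ?case by (simp add: cprefix_0 numeral_3_eq_3)
next
  case (Suc j)
  have "sum_list (cprefix k (Suc j)) + 2 * k = sum_list (cprefix k j) + 2 * k + k * fib (Suc (Suc j))"
    by (simp add: cprefix_Suc Ck_sum)
  also have "\<dots> = k * fib (Suc j + 3)" using Suc.IH
    by (simp add: numeral_3_eq_3 algebra_simps)
  finally show ?case .
qed

lemma cprefix_prefix: "a \<le> b \<Longrightarrow> \<exists>r. cprefix k b = cprefix k a @ r"
proof (induction b)
  case 0 then show ?case by simp
next
  case (Suc b)
  show ?case
  proof (cases "a = Suc b")
    case True then show ?thesis by simp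
  next
    case False
    then obtain r where "cprefix k b = cprefix k a @ r" using Suc by auto
    then show ?thesis by (simp add: cprefix_Suc)
  qed
qed

lemma fib_ge: "fib (i + 2) \<ge> i + 1"
proof (induction i)
  case 0 then show ?case by simp
next
  case (Suc i)
  have "fib (Suc i + 2) = fib (i + 2) + fib (i + 1)" by (simp add: numeral_2_eq_2)
  moreover have "fib (i + 1) \<ge> 1" using fib_neq_0_nat[of "i+1"] by simp
  ultimately show ?case using Suc.IH by simp
qed

lemma cprefix_len_ge: "k \<ge> 1 \<Longrightarrow> length (cprefix k i) \<ge> i"
proof -
  assume "k \<ge> 1"
  have "k * fib (i + 2) \<ge> k * (i + 1)" using mult_le_mono2[OF fib_ge[of i], of k] by simp
  moreover have "k * (i + 1) \<ge> i + k" using \<open>k \<ge> 1\<close> by (simp add: algebra_simps)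
  ultimately show ?thesis using cprefix_len[of k i] by linarith
qed

lemma cseq_nth:
  assumes "k \<ge> 1" "1 \<le> i" "i \<le> length (cprefix k N)"
  shows "cseq k i = cprefix k N ! (i - 1)"
proof -
  have li: "i - 1 < length (cprefix k i)" using cprefix_len_ge[OF assms(1), of i] assms by linarith
  have lN: "i - 1 < length (cprefix k N)" using assms by linarith
  show ?thesis
  proof (cases "i \<le> N")
    case True
    then obtain r where "cprefix k N = cprefix k i @ r" using cprefix_prefix by blast
    then show ?thesis unfolding cseq_def using li by (simp add: nth_append)
  next
    case False
    then obtain r where "cprefix k i = cprefix k N @ r" using cprefix_prefix[of N i] by auto
    then show ?thesis unfolding cseq_def using lN by (simp add: nth_append)
  qed
qed

lemma sum_shift: "(\<Sum>i = 1..<Suc M. f i) = (\<Sum>i<M. f (Suc i) :: int)"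
  by (induction M) simp_all

lemma csum:
  assumes "k \<ge> 1" "M \<le> length (cprefix k N)"
  shows "(\<Sum>i = 1..<Suc M. int (cseq k i)) = int (sum_list (take M (cprefix k N)))"
proof -
  have "(\<Sum>i = 1..<Suc M. int (cseq k i)) = (\<Sum>i<M. int (cseq k (Suc i)))" by (rule sum_shift)
  also have "\<dots> = (\<Sum>i<M. int (cprefix k N ! i))"
  proof (intro sum.cong refl)
    fix x assume "x \<in> {..<M}"
    then show "int (cseq k (Suc x)) = int (cprefix k N ! x)"
      using cseq_nth[OF assms(1), of "Suc x" N] assms(2) by simp
  qed
  also have "\<dots> = int (sum_list (take M (cprefix k N)))"
    using sum_list_take[OF assms(2)] by simp
  finally show ?thesis .
qed

lemma replicate_split: "h < k \<Longrightarrow> replicate k x = replicate h x @ x # replicate (k - h - 1) x"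
  by (metis Suc_diff_Suc diff_Suc_1 diff_diff_left replicate_Suc replicate_add le_add_diff_inverse less_imp_le_nat plus_1_eq_Suc)

theorem theorem5p1:
  fixes k n h t :: nat
  assumes "k \<ge> 1" and "n \<ge> 1" and "h \<le> k - 1" and "1 \<le> t" and "t \<le> fib n"
  shows "(aseq k (k * (fib (n + 1) - 1) + h * fib n + t + 1) =
           int (k * fib (n + 2)) - int k + 1 + int (h * fib (n + 1))
           + \<lfloor>real (fib (n + 1) + 1 + t) * phi\<rfloor> - \<lfloor>real (fib (n + 1) + 1) * phi\<rfloor>) \<and>
         (bseq k (k * (fib (n + 1) - 1) + h * fib n + t + 1) =
           int (k * fib (n + 3)) + int (h * fib (n + 2)) - int k + int t + 2
           + \<lfloor>real (fib (n + 1) + 1 + t) * phi\<rfloor> - \<lfloor>real (fib (n + 1) + 1) * phi\<rfloor>)"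
proof -
  obtain j where nj: "n = Suc j" using assms(2) by (cases n) auto
  define L where "L = length (cprefix k j)"
  define S where "S = sum_list (take t (Cw n))"
  have hk: "h < k" using assms by linarith
  have e2: "j + 2 = n + 1" "j + 3 = n + 2" using nj by simp_all
  have L: "L + k = k * fib (n + 1)" using cprefix_len[of k j] unfolding L_def e2 .
  have Ls: "sum_list (cprefix k j) + 2 * k = k * fib (n + 2)" using cprefix_sum[of k j] unfolding e2 .
  have kF: "k * (fib (n + 1) - 1) = L" using L by (simp add: diff_mult_distrib2)
  define M where "M = L + h * fib n + t"
  have m: "k * (fib (n + 1) - 1) + h * fib n + t + 1 = Suc M" unfolding M_def kF by simp
  have lenCw: "length (Cw n) = fib n" using Cw_len assms by simp
  have decomp: "cprefix k n = cprefix k j @ concat (replicate h (Cw n)) @ Cw n @ concat (replicate (k - h - 1) (Cw n))"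
    using nj cprefix_Suc[of k j] replicate_split[OF hk, of "Cw n"] unfolding Ck_def by simp
  have lc: "length (concat (replicate h (Cw n))) = h * fib n"
    by (simp add: length_concat sum_list_replicate lenCw)
  have sc: "sum_list (concat (replicate h (Cw n))) = h * fib (n + 1)"
    using Cw_sum[OF assms(2)] by (simp add: sum_list_concat' sum_list_replicate)
  have tk: "take M (cprefix k n) = cprefix k j @ concat (replicate h (Cw n)) @ take t (Cw n)"
    unfolding decomp M_def L_def using lc assms(5) lenCw by simp
  have Mle: "M \<le> length (cprefix k n)"
    unfolding decomp M_def L_def using lc assms(5) lenCw by simp
  have csumv: "(\<Sum>i = 1..<Suc M. int (cseq k i)) = int (sum_list (cprefix k j)) + int (h * fib (n + 1)) + int S"
    unfolding csum[OF assms(1) Mle] tk S_def using sc by simp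
  have fl: "\<lfloor>real (fib (n + 1) + 1 + t) * phi\<rfloor> - \<lfloor>real (fib (n + 1) + 1) * phi\<rfloor> = int S"
    using floor_part[OF assms(2) assms(5)] unfolding g_def S_def by simp
  have A: "aseq k (Suc M) = int (k * fib (n + 2)) - int k + 1 + int (h * fib (n + 1)) + int S"
    unfolding aseq_def csumv using Ls by linarith
  have dsum: "(\<Sum>i = 1..<Suc M. int (dseq k i)) = (\<Sum>i = 1..<Suc M. int (cseq k i)) + int M"
    unfolding dseq_def by (simp add: sum.distrib)
  have f3: "fib (n + 3) = fib (n + 2) + fib (n + 1)" by (simp add: numeral_3_eq_3 numeral_2_eq_2)
  have f2: "fib (n + 2) = fib (n + 1) + fib n" by (simp add: numeral_2_eq_2)
  have B: "bseq k (Suc M) = int (k * fib (n + 3)) + int (h * fib (n + 2)) - int k + int t + 2 + int S"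
  proof -
    have "bseq k (Suc M) = int (2 * k + 2) + int (sum_list (cprefix k j)) + int (h * fib (n + 1)) + int S + int M"
      unfolding bseq_def dsum csumv by simp
    also have "\<dots> = int (k * fib (n + 3)) + int (h * fib (n + 2)) - int k + int t + 2 + int S"
    proof -
      have "int (sum_list (cprefix k j)) = int (k * fib (n + 2)) - 2 * int k" using Ls by linarith
      moreover have "int M = int (k * fib (n + 1)) - int k + int (h * fib n) + int t"
        unfolding M_def using L by linarith
      moreover have "int (k * fib (n + 3)) = int (k * fib (n + 2)) + int (k * fib (n + 1))"
        using f3 by (simp add: algebra_simps)
      moreover have "int (h * fib (n + 2)) = int (h * fib (n + 1)) + int (h * fib n)"
        using f2 by (simp add: algebra_simps)
      ultimately show ?thesis by simp
    qed
    finally show ?thesis .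
  qed
  show ?thesis unfolding m using A B fl by simp
qed

end
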